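(* Let $\mathcal S,\mathcal T$ be Hermitian operators on a finite-dimensional Hilbert space satisfying $\mathcal S^2+\mathcal T^2=\mathbb 1$, let $|\psi\rangle$ be a unit vector, and let $m$ be a positive integer. Then $$\langle\psi|(\mathbb 1+\mathcal S)^m+(\mathbb 1+\mathcal T)^m|\psi\rangle\le\max_{\theta\in\mathbb R}\Big((1+\cos\theta)^m+(1+\sin\theta)^m\Big).$$ *)

theory Defs
  imports "Jordan_Normal_Form.Schur_Decomposition"
begin

definition hermitian_mat :: "complex mat \<Rightarrow> bool" where
  "hermitian_mat A \<longleftrightarrow> dim_row A = dim_col A \<and> mat_adjoint A = A"

end

theory Submission
  imports Defs
begin

lemma adj_carrier[simp]: "A \<in> carrier_mat m n \<Longrightarrow> mat_adjoint A \<in> carrier_mat n m"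
  unfolding mat_adjoint_def by (auto simp: mat_of_rows_def)
lemma adj_dim[simp]: "dim_row (mat_adjoint A) = dim_col A" "dim_col (mat_adjoint A) = dim_row A"
  unfolding mat_adjoint_def by (auto simp: mat_of_rows_def)
lemma adj_index[simp]: "i < dim_col A \<Longrightarrow> j < dim_row A \<Longrightarrow> mat_adjoint A $$ (i,j) = cnj (A $$ (j,i))"
  unfolding mat_adjoint_def by (auto simp: mat_of_rows_def)

lemma mult_carrier_nn[simp]: "A \<in> carrier_mat n n \<Longrightarrow> B \<in> carrier_mat n n \<Longrightarrow> A * B \<in> carrier_mat n n"
  by auto

lemma adj_adj[simp]: "mat_adjoint (mat_adjoint (A::complex mat)) = A"
proof (rule eq_matI)
  fix i j assume "i < dim_row A" "j < dim_col A"
  thus "mat_adjoint (mat_adjoint A) $$ (i, j) = A $$ (i, j)"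
    by (subst adj_index, auto)
qed auto

lemma adj_one[simp]: "mat_adjoint (1\<^sub>m n :: complex mat) = 1\<^sub>m n"
  by (rule eq_matI, auto)

lemma adj_mult: assumes "A \<in> carrier_mat n k" "B \<in> carrier_mat k p"
  shows "mat_adjoint (A * B) = mat_adjoint B * mat_adjoint (A :: complex mat)"
  by (rule eq_matI, insert assms, auto simp: scalar_prod_def cnj_sum intro!: sum.cong)

lemma adj_add: assumes "A \<in> carrier_mat n k" "B \<in> carrier_mat n k"
  shows "mat_adjoint (A + B) = mat_adjoint A + mat_adjoint (B :: complex mat)"
  by (rule eq_matI, insert assms, auto)

lemma adj_mult_vec: assumes A: "A \<in> carrier_mat n n" and x: "x \<in> carrier_vec n" and y: "y \<in> carrier_vec n"
  shows "(A *\<^sub>v x) \<bullet>c y = x \<bullet>c (mat_adjoint A *\<^sub>v (y :: complex vec))"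
proof -
  have "(A *\<^sub>v x) \<bullet>c y = (\<Sum>i<n. (\<Sum>j<n. A $$ (i,j) * x $ j) * cnj (y $ i))"
    using A x y by (auto simp: scalar_prod_def row_def lessThan_atLeast0 intro!: sum.cong)
  also have "\<dots> = (\<Sum>i<n. \<Sum>j<n. A $$ (i,j) * x $ j * cnj (y $ i))"
    by (simp add: sum_distrib_right)
  also have "\<dots> = (\<Sum>j<n. \<Sum>i<n. A $$ (i,j) * x $ j * cnj (y $ i))"
    by (rule sum.swap)
  also have "\<dots> = (\<Sum>j<n. x $ j * cnj (\<Sum>i<n. cnj (A $$ (i,j)) * y $ i))"
    by (simp add: cnj_sum sum_distrib_left mult_ac)
  also have "\<dots> = x \<bullet>c (mat_adjoint A *\<^sub>v y)"
    using A x y by (auto simp: scalar_prod_def row_def lessThan_atLeast0 intro!: sum.cong)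
  finally show ?thesis .
qed

definition unitary_m :: "complex mat \<Rightarrow> nat \<Rightarrow> bool" where
  "unitary_m U n \<longleftrightarrow> U \<in> carrier_mat n n \<and> mat_adjoint U * U = 1\<^sub>m n \<and> U * mat_adjoint U = 1\<^sub>m n"

lemma unitary_mult: assumes "unitary_m U n" "unitary_m V n" shows "unitary_m (U * V) n"
proof -
  have U: "U \<in> carrier_mat n n" and V: "V \<in> carrier_mat n n" using assms unfolding unitary_m_def by auto
  have aU: "mat_adjoint U \<in> carrier_mat n n" and aV: "mat_adjoint V \<in> carrier_mat n n" using U V by auto
  have "mat_adjoint (U * V) * (U * V) = mat_adjoint V * ((mat_adjoint U * U) * V)"
    using U V aU aV by (simp add: adj_mult[OF U V] assoc_mult_mat[of _ n n _ n _ n])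
  also have "\<dots> = 1\<^sub>m n" using assms V unfolding unitary_m_def by auto
  finally have 1: "mat_adjoint (U * V) * (U * V) = 1\<^sub>m n" .
  have "(U * V) * mat_adjoint (U * V) = U * ((V * mat_adjoint V) * mat_adjoint U)"
    using U V aU aV by (simp add: adj_mult[OF U V] assoc_mult_mat[of _ n n _ n _ n])
  also have "\<dots> = 1\<^sub>m n" using assms U unfolding unitary_m_def by auto
  finally show ?thesis using 1 U V unfolding unitary_m_def by auto
qed

definition dmat :: "nat \<Rightarrow> (nat \<Rightarrow> real) \<Rightarrow> complex mat" where
  "dmat n d = mat n n (\<lambda>(i,j). if i = j then complex_of_real (d i) else 0)"

lemma dmat_carrier[simp]: "dmat n d \<in> carrier_mat n n" unfolding dmat_def by auto
lemma dmat_dim[simp]: "dim_row (dmat n d) = n" "dim_col (dmat n d) = n" unfolding dmat_def by auto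
lemma dmat_index[simp]: "i < n \<Longrightarrow> j < n \<Longrightarrow> dmat n d $$ (i,j) = (if i = j then complex_of_real (d i) else 0)"
  unfolding dmat_def by auto

lemma cinner_real: fixes w :: "complex vec"
  shows "w \<bullet>c w = complex_of_real (Re (w \<bullet>c w))" "Re (w \<bullet>c w) \<ge> 0"
proof -
  have "0 \<le> w \<bullet>c w" by (rule conjugate_square_ge_0_vec)
  thus "w \<bullet>c w = complex_of_real (Re (w \<bullet>c w))" "Re (w \<bullet>c w) \<ge> 0"
    by (auto simp: less_eq_complex_def complex_eq_iff)
qed

lemma adj_mult_self_index: assumes A: "(A :: complex mat) \<in> carrier_mat n m" and i: "i < m" and j: "j < m"
  shows "(mat_adjoint A * A) $$ (i,j) = col A j \<bullet>c col A i"
  using A i j carrier_matD[OF A] by (auto simp: scalar_prod_def intro!: sum.cong)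

lemma unitary_ext: assumes v: "v \<in> carrier_vec n" and v0: "v \<noteq> 0\<^sub>v n" and n: "0 < n"
  shows "\<exists>W c. unitary_m W n \<and> c \<noteq> 0 \<and> col W 0 = c \<cdot>\<^sub>v v"
proof -
  interpret cof_vec_space n "TYPE(complex)" .
  define b where "b = basis_completion v"
  define ws where "ws = gram_schmidt n b"
  from basis_completion[OF v v0, folded b_def]
  have span_b: "span (set b) = carrier_vec n" and dist_b: "distinct b"
    and indep: "\<not> lin_dep (set b)" and b: "set b \<subseteq> carrier_vec n" and hdb: "hd b = v"
    and len_b: "length b = n" by auto
  from hdb len_b n obtain vs where bv: "b = v # vs" by (cases b, auto)
  from gram_schmidt_result[OF b dist_b indep refl, folded ws_def]
  have ws: "set ws \<subseteq> carrier_vec n" "corthogonal ws" "length ws = n"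
    by (auto simp: len_b)
  from gram_schmidt_hd[OF v, of vs, folded bv] have hdws: "hd ws = v" unfolding ws_def .
  define r where "r = (\<lambda>w :: complex vec. complex_of_real (1 / sqrt (Re (w \<bullet>c w))))"
  define ws' where "ws' = map (\<lambda>w. r w \<cdot>\<^sub>v w) ws"
  define W where "W = mat_of_cols n ws'"
  have wsi: "i < n \<Longrightarrow> ws ! i \<in> carrier_vec n" for i using ws by auto
  have ws'i: "i < n \<Longrightarrow> ws' ! i = r (ws ! i) \<cdot>\<^sub>v ws ! i" for i using ws unfolding ws'_def by auto
  have lenws': "length ws' = n" using ws unfolding ws'_def by auto
  have ws'c: "i < n \<Longrightarrow> ws' ! i \<in> carrier_vec n" for i using ws'i wsi by auto
  have colW: "i < n \<Longrightarrow> col W i = ws' ! i" for i unfolding W_def using ws'c lenws' by auto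
  have Wc: "W \<in> carrier_mat n n" unfolding W_def using lenws' by auto
  have orth: "i < n \<Longrightarrow> j < n \<Longrightarrow> ws' ! j \<bullet>c ws' ! i = (if i = j then 1 else 0)" for i j
  proof -
    assume i: "i < n" and j: "j < n"
    have "ws' ! j \<bullet>c ws' ! i = r (ws ! j) * cnj (r (ws ! i)) * (ws ! j \<bullet>c ws ! i)"
      unfolding ws'i[OF i] ws'i[OF j] conjugate_smult_vec using wsi[OF i] wsi[OF j]
      by (simp add: mult_ac)
    also have "\<dots> = (if i = j then 1 else 0)"
    proof (cases "i = j")
      case True
      let ?q = "ws ! i \<bullet>c ws ! i"
      have "?q \<noteq> 0" using ws(2) i ws(3) unfolding corthogonal_def by auto
      have q: "?q = complex_of_real (Re ?q)" "Re ?q > 0"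
        using cinner_real[of "ws ! i"] \<open>?q \<noteq> 0\<close> by (metis of_real_0 less_eq_real_def)+
      have "r (ws ! j) * cnj (r (ws ! i)) * ?q = complex_of_real (1 / sqrt (Re ?q)) * complex_of_real (1 / sqrt (Re ?q)) * complex_of_real (Re ?q)"
        unfolding r_def using True q(1) by (metis complex_cnj_complex_of_real)
      also have "\<dots> = complex_of_real ((1 / sqrt (Re ?q)) * (1 / sqrt (Re ?q)) * Re ?q)"
        by (simp only: of_real_mult)
      also have "(1 / sqrt (Re ?q)) * (1 / sqrt (Re ?q)) * Re ?q = 1"
        using q(2) by (simp add: field_simps)
      finally show ?thesis using True by simp
    next
      case False
      then show ?thesis using ws(2) i j ws(3) unfolding corthogonal_def by auto
    qed
    finally show ?thesis .
  qed
  have 1: "mat_adjoint W * W = 1\<^sub>m n"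
  proof (rule eq_matI)
    fix i j assume i: "i < dim_row (1\<^sub>m n)" and j: "j < dim_col (1\<^sub>m n)"
    hence "(mat_adjoint W * W) $$ (i,j) = col W j \<bullet>c col W i"
      by (intro adj_mult_self_index[OF Wc], auto)
    also have "\<dots> = 1\<^sub>m n $$ (i,j)" using i j by (simp add: colW orth)
    finally show "(mat_adjoint W * W) $$ (i,j) = 1\<^sub>m n $$ (i,j)" .
  qed (insert Wc, auto)
  have 2: "W * mat_adjoint W = 1\<^sub>m n"
    by (rule mat_mult_left_right_inverse[OF _ Wc 1], insert Wc, auto)
  have hd: "ws ! 0 = v" using hdws n ws(3) by (cases ws, auto)
  have "r v \<noteq> 0"
  proof -
    have "v \<bullet>c v \<noteq> 0" using v v0 by simp
    hence "Re (v \<bullet>c v) > 0" using cinner_real[of v]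
      by (metis of_real_0 less_eq_real_def)
    thus ?thesis unfolding r_def by simp
  qed
  moreover have "col W 0 = r v \<cdot>\<^sub>v v" using colW[OF n] ws'i[OF n] hd by simp
  ultimately show ?thesis using 1 2 Wc unfolding unitary_m_def by blast
qed

lemma mult_unit_vec: assumes A: "A \<in> carrier_mat n m" and i: "i < m"
  shows "A *\<^sub>v unit_vec m i = col (A :: complex mat) i"
proof (rule eq_vecI)
  fix l assume l: "l < dim_vec (col A i)"
  have "(A *\<^sub>v unit_vec m i) $ l = (\<Sum>j\<in>{0..<m}. A $$ (l,j) * (if j = i then 1 else 0))"
    using A l i by (auto simp: scalar_prod_def intro!: sum.cong)
  also have "\<dots> = A $$ (l,i)" using i by (simp add: if_distrib cong: if_cong)
  finally show "(A *\<^sub>v unit_vec m i) $ l = col A i $ l" using A l i by auto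
qed (insert A, auto)

lemma spectral: assumes "A \<in> carrier_mat n n" "hermitian_mat A"
  shows "\<exists>U d. unitary_m U n \<and> A = U * dmat n d * mat_adjoint U"
  using assms
proof (induction n arbitrary: A)
  case 0
  show ?case
    by (rule exI[of _ "1\<^sub>m 0"], rule exI[of _ "\<lambda>_. 0"], insert 0, auto simp: unitary_m_def intro!: eq_matI)
next
  case (Suc k)
  let ?n = "Suc k"
  have A: "A \<in> carrier_mat ?n ?n" and herm: "mat_adjoint A = A" using Suc.prems unfolding hermitian_mat_def by auto
  obtain as where cp: "char_poly A = (\<Prod>a\<leftarrow>as. [:- a, 1:])" and len: "length as = ?n"
    using char_poly_factorized[OF A] by blast
  then obtain e as' where as: "as = e # as'" by (cases as, auto)
  have "poly (char_poly A) e = 0" unfolding cp as by simp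
  hence ev: "eigenvalue A e" using eigenvalue_root_char_poly[OF A] by simp
  define v where "v = find_eigenvector A e"
  have "eigenvector A v e" unfolding v_def by (rule find_eigenvector[OF A ev])
  hence v: "v \<in> carrier_vec ?n" and v0: "v \<noteq> 0\<^sub>v ?n" and Av: "A *\<^sub>v v = e \<cdot>\<^sub>v v"
    unfolding eigenvector_def using A by auto
  have vv: "v \<bullet>c v \<noteq> 0" using v v0 by simp
  have "e * (v \<bullet>c v) = (A *\<^sub>v v) \<bullet>c v" unfolding Av using v by simp
  also have "\<dots> = v \<bullet>c (A *\<^sub>v v)" using adj_mult_vec[OF A v v] herm by simp
  also have "\<dots> = cnj e * (v \<bullet>c v)" unfolding Av conjugate_smult_vec using v by simp
  finally have "e = cnj e" using vv by simp
  hence ereal: "complex_of_real (Re e) = e" by (metis Reals_cnj_iff complex_is_Real_iff of_real_Re)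
  obtain W c where W: "unitary_m W ?n" and c: "c \<noteq> 0" and colW: "col W 0 = c \<cdot>\<^sub>v v"
    using unitary_ext[OF v v0] by auto
  have Wc: "W \<in> carrier_mat ?n ?n" and WW: "mat_adjoint W * W = 1\<^sub>m ?n" "W * mat_adjoint W = 1\<^sub>m ?n"
    using W unfolding unitary_m_def by auto
  have aWc: "mat_adjoint W \<in> carrier_mat ?n ?n" using Wc by simp
  let ?e0 = "unit_vec ?n 0 :: complex vec"
  have We0: "W *\<^sub>v ?e0 = c \<cdot>\<^sub>v v" using mult_unit_vec[OF Wc, of 0] colW by simp
  have "?e0 = mat_adjoint W *\<^sub>v (W *\<^sub>v ?e0)"
    using WW Wc aWc by (simp flip: assoc_mult_mat_vec[of _ ?n ?n _ ?n])
  also have "\<dots> = c \<cdot>\<^sub>v (mat_adjoint W *\<^sub>v v)" unfolding We0 using aWc v by (simp add: mult_mat_vec)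
  finally have aWv: "mat_adjoint W *\<^sub>v v = (1 / c) \<cdot>\<^sub>v ?e0" using c
    by (metis (no_types, lifting) smult_smult_assoc divide_self_if nonzero_divide_eq_eq one_smult_vec)
  define A' where "A' = mat_adjoint W * A * W"
  have A'c: "A' \<in> carrier_mat ?n ?n" unfolding A'_def using A Wc by simp
  have "A' *\<^sub>v ?e0 = mat_adjoint W *\<^sub>v (A *\<^sub>v (W *\<^sub>v ?e0))"
    unfolding A'_def using A Wc aWc by (simp add: assoc_mult_mat_vec[of _ ?n ?n _ ?n])
  also have "\<dots> = e \<cdot>\<^sub>v ?e0" unfolding We0 using A v aWc c
    by (simp add: mult_mat_vec Av aWv smult_smult_assoc)
  finally have A'e0: "A' *\<^sub>v ?e0 = e \<cdot>\<^sub>v ?e0" .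
  have col0: "i < ?n \<Longrightarrow> A' $$ (i,0) = (if i = 0 then e else 0)" for i
    using arg_cong[OF A'e0, of "\<lambda>x. x $ i"] mult_unit_vec[OF A'c, of 0] A'c by auto
  have hA': "mat_adjoint A' = A'"
    unfolding A'_def using A Wc aWc herm by (simp add: adj_mult[of _ ?n ?n _ ?n] assoc_mult_mat[OF aWc A Wc])
  have row0: "j < ?n \<Longrightarrow> A' $$ (0,j) = (if j = 0 then e else 0)" for j
  proof -
    assume j: "j < ?n"
    have "A' $$ (0,j) = mat_adjoint A' $$ (0,j)" using hA' by simp
    also have "\<dots> = cnj (A' $$ (j,0))" using A'c j by simp
    finally show ?thesis using col0[OF j] \<open>e = cnj e\<close> by auto
  qed
  define A3 where "A3 = mat k k (\<lambda>(i,j). A' $$ (Suc i, Suc j))"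
  have A3c: "A3 \<in> carrier_mat k k" unfolding A3_def by simp
  have hA3: "hermitian_mat A3" unfolding hermitian_mat_def
  proof (intro conjI eq_matI)
    fix i j assume i: "i < dim_row A3" and j: "j < dim_col A3"
    have "mat_adjoint A3 $$ (i,j) = cnj (A' $$ (Suc j, Suc i))" using i j A3c unfolding A3_def by simp
    also have "\<dots> = mat_adjoint A' $$ (Suc i, Suc j)" using i j A3c A'c by simp
    also have "\<dots> = A3 $$ (i,j)" unfolding hA' using i j A3c unfolding A3_def by simp
    finally show "mat_adjoint A3 $$ (i,j) = A3 $$ (i,j)" .
  qed (insert A3c, auto)
  obtain U3 d3 where U3: "unitary_m U3 k" and A3eq: "A3 = U3 * dmat k d3 * mat_adjoint U3"
    using Suc.IH[OF A3c hA3] by blast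
  have U3c: "U3 \<in> carrier_mat k k" and UU3: "mat_adjoint U3 * U3 = 1\<^sub>m k" "U3 * mat_adjoint U3 = 1\<^sub>m k"
    using U3 unfolding unitary_m_def by auto
  define U0 where "U0 = four_block_mat (1\<^sub>m 1) (0\<^sub>m 1 k) (0\<^sub>m k 1) U3"
  have U0c: "U0 \<in> carrier_mat ?n ?n" unfolding U0_def using U3c by auto
  have aU0: "mat_adjoint U0 = four_block_mat (1\<^sub>m 1) (0\<^sub>m 1 k) (0\<^sub>m k 1) (mat_adjoint U3)"
    unfolding U0_def by (rule eq_matI, insert U3c, auto)
  have "mat_adjoint U0 * U0 = 1\<^sub>m ?n" unfolding aU0 unfolding U0_def
    by (subst mult_four_block_mat[of _ 1 1 _ k _ k _ _ 1 _ k], insert U3c UU3, auto)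
  moreover have "U0 * mat_adjoint U0 = 1\<^sub>m ?n" unfolding aU0 unfolding U0_def
    by (subst mult_four_block_mat[of _ 1 1 _ k _ k _ _ 1 _ k], insert U3c UU3, auto)
  ultimately have U0: "unitary_m U0 ?n" using U0c unfolding unitary_m_def by auto
  define d where "d = (\<lambda>i. if i = 0 then Re e else d3 (i - 1))"
  have Deq: "dmat ?n d = four_block_mat (dmat 1 (\<lambda>_. Re e)) (0\<^sub>m 1 k) (0\<^sub>m k 1) (dmat k d3)"
    by (rule eq_matI, auto simp: d_def)
  have "U0 * dmat ?n d * mat_adjoint U0 = four_block_mat (dmat 1 (\<lambda>_. Re e)) (0\<^sub>m 1 k) (0\<^sub>m k 1) A3"
    unfolding aU0 unfolding U0_def Deq A3eq
    apply (subst mult_four_block_mat[of _ 1 1 _ k _ k _ _ 1 _ k], insert U3c, auto)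
    apply (subst mult_four_block_mat[of _ 1 1 _ k _ k _ _ 1 _ k], insert U3c, auto)
    done
  also have "\<dots> = A'"
  proof (rule eq_matI)
    fix i j assume i: "i < dim_row A'" and j: "j < dim_col A'"
    show "four_block_mat (dmat 1 (\<lambda>_. Re e)) (0\<^sub>m 1 k) (0\<^sub>m k 1) A3 $$ (i, j) = A' $$ (i, j)"
      using i j A'c A3c col0 row0 ereal unfolding A3_def
      by (cases i; cases j; auto)
  qed (insert A'c A3c, auto)
  finally have A'eq: "U0 * dmat ?n d * mat_adjoint U0 = A'" .
  have "A = W * A' * mat_adjoint W"
    unfolding A'_def using A Wc aWc WW
    by (simp add: assoc_mult_mat[of _ ?n ?n _ ?n _ ?n] flip: assoc_mult_mat[of W ?n ?n "mat_adjoint W" ?n _ ?n])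
  also have "\<dots> = (W * U0) * dmat ?n d * mat_adjoint (W * U0)"
    unfolding A'eq[symmetric] using Wc U0c aWc
    by (simp add: adj_mult[OF Wc U0c] assoc_mult_mat[of _ ?n ?n _ ?n _ ?n])
  finally show ?case using unitary_mult[OF W U0] by blast
qed

lemma dmat_mult_vec: assumes x: "x \<in> carrier_vec n"
  shows "dmat n a *\<^sub>v x = vec n (\<lambda>i. complex_of_real (a i) * x $ i)"
proof (rule eq_vecI)
  fix i assume i: "i < dim_vec (vec n (\<lambda>i. complex_of_real (a i) * x $ i))"
  hence i: "i < n" by simp
  have "(dmat n a *\<^sub>v x) $ i = (\<Sum>j\<in>{0..<n}. (if i = j then complex_of_real (a i) else 0) * x $ j)"
    using x i by (auto simp: scalar_prod_def intro!: sum.cong)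
  also have "\<dots> = (\<Sum>j\<in>{0..<n}. if i = j then complex_of_real (a i) * x $ i else 0)"
    by (rule sum.cong, auto)
  also have "\<dots> = complex_of_real (a i) * x $ i" using i by simp
  finally show "(dmat n a *\<^sub>v x) $ i = vec n (\<lambda>i. complex_of_real (a i) * x $ i) $ i" using i by simp
qed (insert x, auto)

lemma dmat_mult: "dmat n a * dmat n b = dmat n (\<lambda>i. a i * b i)"
proof (rule eq_matI)
  fix i j assume i: "i < dim_row (dmat n (\<lambda>i. a i * b i))" and j: "j < dim_col (dmat n (\<lambda>i. a i * b i))"
  hence i: "i < n" and j: "j < n" by auto
  have "(dmat n a * dmat n b) $$ (i,j) = (\<Sum>l\<in>{0..<n}. (if i = l then complex_of_real (a i) else 0) * (if l = j then complex_of_real (b l) else 0))"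
    using i j by (auto simp: scalar_prod_def intro!: sum.cong)
  also have "\<dots> = dmat n (\<lambda>i. a i * b i) $$ (i,j)" using i j by (simp add: if_distrib cong: if_cong)
  finally show "(dmat n a * dmat n b) $$ (i,j) = dmat n (\<lambda>i. a i * b i) $$ (i,j)" .
qed auto

lemma dmat_pow: "dmat n a ^\<^sub>m k = dmat n (\<lambda>i. a i ^ k)"
proof (induction k)
  case 0
  show ?case by (rule eq_matI, auto)
next
  case (Suc k)
  show ?case by (simp add: Suc dmat_mult mult.commute)
qed

lemma one_plus_dmat: "1\<^sub>m n + dmat n a = dmat n (\<lambda>i. 1 + a i)"
  by (rule eq_matI, auto)

lemma unitary_adj: "unitary_m U n \<Longrightarrow> unitary_m (mat_adjoint U) n"
  unfolding unitary_m_def by auto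

lemma conj_mult: assumes U: "unitary_m U n" and D: "D \<in> carrier_mat n n" and E: "E \<in> carrier_mat n n"
  shows "(U * D * mat_adjoint U) * (U * E * mat_adjoint U) = U * (D * E) * mat_adjoint U"
proof -
  have Uc: "U \<in> carrier_mat n n" and aU: "mat_adjoint U \<in> carrier_mat n n" and UU: "mat_adjoint U * U = 1\<^sub>m n"
    using U unfolding unitary_m_def by auto
  have "(U * D * mat_adjoint U) * (U * E * mat_adjoint U) = U * (D * ((mat_adjoint U * U) * (E * mat_adjoint U)))"
    using Uc aU D E by (simp add: assoc_mult_mat[of _ n n _ n _ n])
  also have "\<dots> = U * (D * E) * mat_adjoint U" unfolding UU
    using Uc aU D E by (simp add: assoc_mult_mat[of _ n n _ n _ n])
  finally show ?thesis .
qed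

lemma conj_pow: assumes U: "unitary_m U n" and D: "D \<in> carrier_mat n n"
  shows "(U * D * mat_adjoint U) ^\<^sub>m k = U * (D ^\<^sub>m k) * mat_adjoint U"
proof (induction k)
  case 0
  have Uc: "U \<in> carrier_mat n n" and UU: "U * mat_adjoint U = 1\<^sub>m n" using U unfolding unitary_m_def by auto
  show ?case using Uc D UU by simp
next
  case (Suc k)
  show ?case using conj_mult[OF U pow_carrier_mat[OF D, of k] D] by (simp add: Suc)
qed

lemma conj_one_plus: assumes U: "unitary_m U n" and D: "D \<in> carrier_mat n n"
  shows "1\<^sub>m n + U * D * mat_adjoint U = U * (1\<^sub>m n + D) * mat_adjoint U"
proof -
  have Uc: "U \<in> carrier_mat n n" and aU: "mat_adjoint U \<in> carrier_mat n n" and UU: "U * mat_adjoint U = 1\<^sub>m n"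
    using U unfolding unitary_m_def by auto
  have "U * (1\<^sub>m n + D) = U + U * D"
    using mult_add_distrib_mat[OF Uc one_carrier_mat D] Uc by simp
  hence "U * (1\<^sub>m n + D) * mat_adjoint U = U * mat_adjoint U + U * D * mat_adjoint U"
    using add_mult_distrib_mat[OF Uc _ aU, of "U * D"] Uc D by simp
  thus ?thesis using UU Uc by simp
qed

lemma expect: assumes U: "unitary_m U n" and psi: "\<psi> \<in> carrier_vec n"
  shows "((U * dmat n a * mat_adjoint U) *\<^sub>v \<psi>) \<bullet>c \<psi>
    = complex_of_real (\<Sum>i\<in>{0..<n}. a i * (cmod ((mat_adjoint U *\<^sub>v \<psi>) $ i))^2)"
proof -
  have Uc: "U \<in> carrier_mat n n" and aU: "mat_adjoint U \<in> carrier_mat n n"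
    using U unfolding unitary_m_def by auto
  define \<phi> where "\<phi> = mat_adjoint U *\<^sub>v \<psi>"
  have phi: "\<phi> \<in> carrier_vec n" unfolding \<phi>_def using aU psi by simp
  have "(U * dmat n a * mat_adjoint U) *\<^sub>v \<psi> = U *\<^sub>v (dmat n a *\<^sub>v \<phi>)"
  proof -
    have "(U * dmat n a * mat_adjoint U) *\<^sub>v \<psi> = (U * dmat n a) *\<^sub>v \<phi>"
      unfolding \<phi>_def by (rule assoc_mult_mat_vec[of _ n n _ n], insert Uc aU psi, auto)
    also have "\<dots> = U *\<^sub>v (dmat n a *\<^sub>v \<phi>)" by (rule assoc_mult_mat_vec[OF Uc dmat_carrier phi])
    finally show ?thesis .
  qed
  have dphi: "dmat n a *\<^sub>v \<phi> \<in> carrier_vec n" by (rule mult_mat_vec_carrier[OF dmat_carrier phi])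
  have "((U * dmat n a * mat_adjoint U) *\<^sub>v \<psi>) \<bullet>c \<psi> = (U *\<^sub>v (dmat n a *\<^sub>v \<phi>)) \<bullet>c \<psi>"
    by (simp only: \<open>(U * dmat n a * mat_adjoint U) *\<^sub>v \<psi> = U *\<^sub>v (dmat n a *\<^sub>v \<phi>)\<close>)
  also have "\<dots> = (dmat n a *\<^sub>v \<phi>) \<bullet>c \<phi>"
    using adj_mult_vec[OF Uc dphi psi] unfolding \<phi>_def .
  also have "\<dots> = (\<Sum>i\<in>{0..<n}. complex_of_real (a i) * (\<phi> $ i * cnj (\<phi> $ i)))"
    using phi by (simp add: dmat_mult_vec scalar_prod_def mult.assoc)
  also have "\<dots> = complex_of_real (\<Sum>i\<in>{0..<n}. a i * (cmod (\<phi> $ i))^2)"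
    by (simp add: complex_norm_square[symmetric] del: of_real_power)
  finally show ?thesis unfolding \<phi>_def .
qed

lemma trig_bound: fixes x :: real assumes x: "x^2 \<le> 1"
  shows "(1 + \<bar>x\<bar>)^m + (1 + sqrt (1 - x^2))^m \<le> (SUP \<theta>::real. (1 + cos \<theta>) ^ m + (1 + sin \<theta>) ^ m)"
proof -
  have bdd: "bdd_above (range (\<lambda>\<theta>::real. (1 + cos \<theta>) ^ m + (1 + sin \<theta>) ^ m))"
  proof (rule bdd_aboveI2)
    fix \<theta> :: real
    have "(1 + cos \<theta>) ^ m \<le> 2 ^ m" using cos_le_one[of \<theta>] cos_ge_minus_one[of \<theta>] by (intro power_mono) linarith+
    moreover have "(1 + sin \<theta>) ^ m \<le> 2 ^ m" using sin_le_one[of \<theta>] sin_ge_minus_one[of \<theta>] by (intro power_mono) linarith+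
    ultimately show "(1 + cos \<theta>) ^ m + (1 + sin \<theta>) ^ m \<le> 2 ^ m + 2 ^ m" by simp
  qed
  have ax: "\<bar>x\<bar> \<le> 1" using x by (simp add: abs_square_le_1)
  have "cos (arccos \<bar>x\<bar>) = \<bar>x\<bar>" using ax by simp
  moreover have "sin (arccos \<bar>x\<bar>) = sqrt (1 - x^2)" using sin_arccos_abs[of "\<bar>x\<bar>"] ax by simp
  ultimately show ?thesis using cSUP_upper[OF UNIV_I bdd, of "arccos \<bar>x\<bar>"] by simp
qed

lemma pow_abs_bound: fixes t :: real shows "(1 + t)^m \<le> (1 + \<bar>t\<bar>)^m"
proof -
  have "(1 + t)^m \<le> \<bar>(1 + t)^m\<bar>" by simp
  also have "\<dots> = \<bar>1 + t\<bar>^m" by (simp add: power_abs)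
  also have "\<dots> \<le> (1 + \<bar>t\<bar>)^m" by (rule power_mono, auto)
  finally show ?thesis .
qed

lemma dmat_mult_left_index: assumes X: "X \<in> carrier_mat n n" and i: "i < n" and j: "j < n"
  shows "(dmat n a * X) $$ (i,j) = complex_of_real (a i) * X $$ (i,j)"
proof -
  have "(dmat n a * X) $$ (i,j) = (\<Sum>l\<in>{0..<n}. (if i = l then complex_of_real (a i) else 0) * X $$ (l,j))"
    using X i j by (auto simp: scalar_prod_def intro!: sum.cong)
  also have "\<dots> = (\<Sum>l\<in>{0..<n}. if i = l then complex_of_real (a i) * X $$ (i,j) else 0)"
    by (rule sum.cong, auto)
  also have "\<dots> = complex_of_real (a i) * X $$ (i,j)" using i by simp
  finally show ?thesis .
qed

lemma dmat_mult_right_index: assumes X: "X \<in> carrier_mat n n" and i: "i < n" and j: "j < n"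
  shows "(X * dmat n a) $$ (i,j) = X $$ (i,j) * complex_of_real (a j)"
proof -
  have "(X * dmat n a) $$ (i,j) = (\<Sum>l\<in>{0..<n}. X $$ (i,l) * (if l = j then complex_of_real (a j) else 0))"
    using X i j by (auto simp: scalar_prod_def intro!: sum.cong)
  also have "\<dots> = (\<Sum>l\<in>{0..<n}. if j = l then X $$ (i,j) * complex_of_real (a j) else 0)"
    by (rule sum.cong, auto)
  also have "\<dots> = X $$ (i,j) * complex_of_real (a j)" using j by simp
  finally show ?thesis .
qed

theorem lemma2:
  fixes n m :: nat and S T :: "complex mat" and \<psi> :: "complex vec"
  assumes "S \<in> carrier_mat n n" and "T \<in> carrier_mat n n"
    and "hermitian_mat S" and "hermitian_mat T"
    and "S * S + T * T = 1\<^sub>m n"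
    and "\<psi> \<in> carrier_vec n" and "\<psi> \<bullet>c \<psi> = 1"
    and "m > 0"
  shows "Re ((((1\<^sub>m n + S) ^\<^sub>m m + (1\<^sub>m n + T) ^\<^sub>m m) *\<^sub>v \<psi>) \<bullet>c \<psi>)
           \<le> (SUP \<theta>::real. (1 + cos \<theta>) ^ m + (1 + sin \<theta>) ^ m)"
proof -
  have Sc: "S \<in> carrier_mat n n" and Tc: "T \<in> carrier_mat n n" and hS: "hermitian_mat S"
    and hT: "hermitian_mat T" and ST: "S * S + T * T = 1\<^sub>m n" and psi: "\<psi> \<in> carrier_vec n"
    and nrm: "\<psi> \<bullet>c \<psi> = 1" using assms by auto
  obtain U d where U: "unitary_m U n" and Seq: "S = U * dmat n d * mat_adjoint U"
    using spectral[OF Sc hS] by blast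
  obtain V e where V: "unitary_m V n" and Teq: "T = V * dmat n e * mat_adjoint V"
    using spectral[OF Tc hT] by blast
  have Uc: "U \<in> carrier_mat n n" and aUc: "mat_adjoint U \<in> carrier_mat n n"
    and UU1: "mat_adjoint U * U = 1\<^sub>m n" and UU2: "U * mat_adjoint U = 1\<^sub>m n"
    using U unfolding unitary_m_def by auto
  have Vc: "V \<in> carrier_mat n n" and aVc: "mat_adjoint V \<in> carrier_mat n n"
    and VV1: "mat_adjoint V * V = 1\<^sub>m n" and VV2: "V * mat_adjoint V = 1\<^sub>m n"
    using V unfolding unitary_m_def by auto
  define \<phi> where "\<phi> = mat_adjoint U *\<^sub>v \<psi>"
  define w where "w = mat_adjoint V *\<^sub>v \<psi>"
  have phi: "\<phi> \<in> carrier_vec n" unfolding \<phi>_def by (rule mult_mat_vec_carrier[OF aUc psi])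
  have wc: "w \<in> carrier_vec n" unfolding w_def by (rule mult_mat_vec_carrier[OF aVc psi])
  have pow1: "(1\<^sub>m n + S) ^\<^sub>m m = U * dmat n (\<lambda>i. (1 + d i)^m) * mat_adjoint U"
    unfolding Seq conj_one_plus[OF U dmat_carrier] one_plus_dmat conj_pow[OF U dmat_carrier] dmat_pow ..
  have pow2: "(1\<^sub>m n + T) ^\<^sub>m m = V * dmat n (\<lambda>i. (1 + e i)^m) * mat_adjoint V"
    unfolding Teq conj_one_plus[OF V dmat_carrier] one_plus_dmat conj_pow[OF V dmat_carrier] dmat_pow ..
  define sum1 where "sum1 = (\<Sum>i\<in>{0..<n}. (1 + d i)^m * (cmod (\<phi> $ i))^2)"
  define sum2 where "sum2 = (\<Sum>j\<in>{0..<n}. (1 + e j)^m * (cmod (w $ j))^2)"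
  let ?P = "U * dmat n (\<lambda>i. (1 + d i)^m) * mat_adjoint U"
  let ?Q = "V * dmat n (\<lambda>i. (1 + e i)^m) * mat_adjoint V"
  have Pc: "?P \<in> carrier_mat n n" using Uc aUc by simp
  have Qc: "?Q \<in> carrier_mat n n" using Vc aVc by simp
  have "((?P + ?Q) *\<^sub>v \<psi>) \<bullet>c \<psi> = (?P *\<^sub>v \<psi> + ?Q *\<^sub>v \<psi>) \<bullet>c \<psi>"
    by (subst add_mult_distrib_mat_vec[OF Pc Qc psi], rule refl)
  also have "\<dots> = (?P *\<^sub>v \<psi>) \<bullet>c \<psi> + (?Q *\<^sub>v \<psi>) \<bullet>c \<psi>"
    by (rule add_scalar_prod_distrib[of _ n], insert Pc Qc psi, auto)
  also have "\<dots> = complex_of_real sum1 + complex_of_real sum2"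
    unfolding expect[OF U psi] expect[OF V psi] sum1_def sum2_def \<phi>_def w_def ..
  finally have LHS: "Re ((((1\<^sub>m n + S) ^\<^sub>m m + (1\<^sub>m n + T) ^\<^sub>m m) *\<^sub>v \<psi>) \<bullet>c \<psi>) = sum1 + sum2"
    unfolding pow1 pow2 by simp
  define X where "X = mat_adjoint U * V"
  have X: "unitary_m X n" unfolding X_def by (rule unitary_mult[OF unitary_adj[OF U] V])
  have Xc: "X \<in> carrier_mat n n" and aXc: "mat_adjoint X \<in> carrier_mat n n"
    and XX2: "X * mat_adjoint X = 1\<^sub>m n" using X unfolding unitary_m_def by auto
  let ?D2 = "dmat n (\<lambda>i. (d i)^2)"
  let ?E2 = "dmat n (\<lambda>i. (e i)^2)"
  have SS: "S * S = U * ?D2 * mat_adjoint U"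
    using conj_mult[OF U dmat_carrier dmat_carrier, of d d] unfolding Seq dmat_mult power2_eq_square .
  have TT: "T * T = V * ?E2 * mat_adjoint V"
    using conj_mult[OF V dmat_carrier dmat_carrier, of e e] unfolding Teq dmat_mult power2_eq_square .
  have SSc: "S * S \<in> carrier_mat n n" and TTc: "T * T \<in> carrier_mat n n" using Sc Tc by auto
  have "X = mat_adjoint U * (S * S + T * T) * V" unfolding ST X_def using right_mult_one_mat[OF aUc] by simp
  also have "\<dots> = mat_adjoint U * (S * S) * V + mat_adjoint U * (T * T) * V"
  proof -
    have "mat_adjoint U * (S * S + T * T) = mat_adjoint U * (S * S) + mat_adjoint U * (T * T)"
      by (rule mult_add_distrib_mat[OF aUc SSc TTc])
    thus ?thesis using add_mult_distrib_mat[of "mat_adjoint U * (S * S)" n n "mat_adjoint U * (T * T)" V n]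
      aUc SSc TTc Vc by simp
  qed
  also have "mat_adjoint U * (S * S) * V = ?D2 * X"
  proof -
    have "mat_adjoint U * (S * S) * V = (mat_adjoint U * U) * ?D2 * (mat_adjoint U * V)"
      unfolding SS using Uc aUc Vc by (simp add: assoc_mult_mat[of _ n n _ n _ n])
    thus ?thesis unfolding UU1 X_def by simp
  qed
  also have "mat_adjoint U * (T * T) * V = X * ?E2"
  proof -
    have "mat_adjoint U * (T * T) * V = (mat_adjoint U * V) * ?E2 * (mat_adjoint V * V)"
      unfolding TT using Uc aUc Vc aVc by (simp add: assoc_mult_mat[of _ n n _ n _ n])
    thus ?thesis unfolding VV1 X_def using Uc aUc Vc by simp
  qed
  finally have relm: "X = ?D2 * X + X * ?E2" .
  have rel: "i < n \<Longrightarrow> j < n \<Longrightarrow> X $$ (i,j) \<noteq> 0 \<Longrightarrow> (d i)^2 + (e j)^2 = 1" for i j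
  proof -
    assume i: "i < n" and j: "j < n" and x0: "X $$ (i,j) \<noteq> 0"
    have "X $$ (i,j) = (?D2 * X + X * ?E2) $$ (i,j)" using relm by simp
    also have "\<dots> = complex_of_real ((d i)^2) * X $$ (i,j) + X $$ (i,j) * complex_of_real ((e j)^2)"
      using i j Xc by (simp add: dmat_mult_left_index[OF Xc i j] dmat_mult_right_index[OF Xc i j])
    also have "\<dots> = complex_of_real ((d i)^2 + (e j)^2) * X $$ (i,j)" by (simp add: algebra_simps)
    finally have "complex_of_real ((d i)^2 + (e j)^2) = 1" using x0
      by (metis mult_cancel_right2)
    thus ?thesis by (metis of_real_eq_1_iff)
  qed
  have aX: "mat_adjoint X = mat_adjoint V * U" unfolding X_def using adj_mult[OF aUc Vc] by simp
  have wX: "w = mat_adjoint X *\<^sub>v \<phi>"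
  proof -
    have "mat_adjoint X *\<^sub>v \<phi> = mat_adjoint V *\<^sub>v (U *\<^sub>v (mat_adjoint U *\<^sub>v \<psi>))"
      unfolding aX \<phi>_def by (rule assoc_mult_mat_vec[OF aVc Uc mult_mat_vec_carrier[OF aUc psi]])
    also have "U *\<^sub>v (mat_adjoint U *\<^sub>v \<psi>) = \<psi>"
      using assoc_mult_mat_vec[OF Uc aUc psi] UU2 psi by simp
    finally show ?thesis unfolding w_def by simp
  qed
  define b where "b = (\<lambda>i. (1 + sqrt (1 - (d i)^2))^m)"
  define c where "c = (\<lambda>j. (1 + \<bar>e j\<bar>)^m)"
  have bc: "i < n \<Longrightarrow> j < n \<Longrightarrow> X $$ (i,j) \<noteq> 0 \<Longrightarrow> c j = b i" for i j
  proof -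
    assume "i < n" "j < n" "X $$ (i,j) \<noteq> 0"
    from rel[OF this] have "1 - (d i)^2 = (e j)^2" by simp
    hence "sqrt (1 - (d i)^2) = \<bar>e j\<bar>" by simp
    thus ?thesis unfolding b_def c_def by simp
  qed
  have dle: "i < n \<Longrightarrow> (d i)^2 \<le> 1" for i
  proof (rule ccontr)
    assume i: "i < n" and gt: "\<not> (d i)^2 \<le> 1"
    have z: "j < n \<Longrightarrow> X $$ (i,j) = 0" for j
    proof (rule ccontr)
      assume "j < n" "X $$ (i,j) \<noteq> 0"
      from rel[OF i this] gt show False by (smt (verit) zero_le_power2)
    qed
    have "(X * mat_adjoint X) $$ (i,i) = (\<Sum>l\<in>{0..<n}. X $$ (i,l) * cnj (X $$ (i,l)))"
      using Xc i by (auto simp: scalar_prod_def intro!: sum.cong)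
    also have "\<dots> = 0" using z by simp
    finally show False using XX2 i by simp
  qed
  define y where "y = vec n (\<lambda>i. complex_of_real (b i) * \<phi> $ i)"
  have yc: "y \<in> carrier_vec n" unfolding y_def by simp
  have Xy: "mat_adjoint X *\<^sub>v y = vec n (\<lambda>j. complex_of_real (c j) * w $ j)"
  proof (rule eq_vecI)
    fix j assume "j < dim_vec (vec n (\<lambda>j. complex_of_real (c j) * w $ j))"
    hence j: "j < n" by simp
    have "(mat_adjoint X *\<^sub>v y) $ j = (\<Sum>i\<in>{0..<n}. cnj (X $$ (i,j)) * (complex_of_real (b i) * \<phi> $ i))"
      using Xc aXc j unfolding y_def by (auto simp: scalar_prod_def intro!: sum.cong)
    also have "\<dots> = (\<Sum>i\<in>{0..<n}. complex_of_real (c j) * (cnj (X $$ (i,j)) * \<phi> $ i))"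
    proof (rule sum.cong[OF refl])
      fix i assume "i \<in> {0..<n}"
      hence i: "i < n" by simp
      show "cnj (X $$ (i,j)) * (complex_of_real (b i) * \<phi> $ i) = complex_of_real (c j) * (cnj (X $$ (i,j)) * \<phi> $ i)"
        using bc[OF i j] by (cases "X $$ (i,j) = 0", auto)
    qed
    also have "\<dots> = complex_of_real (c j) * (mat_adjoint X *\<^sub>v \<phi>) $ j"
      using Xc aXc j phi by (auto simp: scalar_prod_def sum_distrib_left intro!: sum.cong)
    finally show "(mat_adjoint X *\<^sub>v y) $ j = vec n (\<lambda>j. complex_of_real (c j) * w $ j) $ j"
      using j unfolding wX by simp
  qed (insert aXc, auto)
  have key: "(\<Sum>j\<in>{0..<n}. c j * (cmod (w $ j))^2) = (\<Sum>i\<in>{0..<n}. b i * (cmod (\<phi> $ i))^2)"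
  proof -
    have "complex_of_real (\<Sum>j\<in>{0..<n}. c j * (cmod (w $ j))^2) = vec n (\<lambda>j. complex_of_real (c j) * w $ j) \<bullet>c w"
      using wc by (simp add: scalar_prod_def complex_norm_square[symmetric] mult.assoc del: of_real_power)
    also have "\<dots> = (mat_adjoint X *\<^sub>v y) \<bullet>c (mat_adjoint X *\<^sub>v \<phi>)" unfolding Xy wX ..
    also have "\<dots> = y \<bullet>c (X *\<^sub>v (mat_adjoint X *\<^sub>v \<phi>))"
      using adj_mult_vec[OF aXc yc mult_mat_vec_carrier[OF aXc phi]] by simp
    also have "X *\<^sub>v (mat_adjoint X *\<^sub>v \<phi>) = \<phi>"
      using assoc_mult_mat_vec[OF Xc aXc phi] XX2 phi by simp
    also have "y \<bullet>c \<phi> = complex_of_real (\<Sum>i\<in>{0..<n}. b i * (cmod (\<phi> $ i))^2)"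
      using phi unfolding y_def by (simp add: scalar_prod_def complex_norm_square[symmetric] mult.assoc del: of_real_power)
    finally show ?thesis by (simp only: of_real_eq_iff)
  qed
  have norm_phi: "(\<Sum>i\<in>{0..<n}. (cmod (\<phi> $ i))^2) = 1"
  proof -
    have "dmat n (\<lambda>_. 1) = 1\<^sub>m n" by (rule eq_matI, auto)
    hence "U * dmat n (\<lambda>_. 1) * mat_adjoint U = 1\<^sub>m n" using UU2 Uc by simp
    hence "complex_of_real (\<Sum>i\<in>{0..<n}. 1 * (cmod (\<phi> $ i))^2) = 1"
      using expect[OF U psi, of "\<lambda>_. 1"] nrm psi unfolding \<phi>_def by simp
    thus ?thesis by (simp only: of_real_eq_1_iff mult_1)
  qed
  let ?M = "(SUP \<theta>::real. (1 + cos \<theta>) ^ m + (1 + sin \<theta>) ^ m)"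
  have "sum2 \<le> (\<Sum>j\<in>{0..<n}. c j * (cmod (w $ j))^2)"
    unfolding sum2_def c_def by (rule sum_mono, rule mult_right_mono, rule pow_abs_bound, simp)
  also have "\<dots> = (\<Sum>i\<in>{0..<n}. b i * (cmod (\<phi> $ i))^2)" by (rule key)
  finally have "sum1 + sum2 \<le> (\<Sum>i\<in>{0..<n}. ((1 + d i)^m + b i) * (cmod (\<phi> $ i))^2)"
    unfolding sum1_def by (simp add: sum.distrib algebra_simps)
  also have "\<dots> \<le> (\<Sum>i\<in>{0..<n}. ?M * (cmod (\<phi> $ i))^2)"
  proof (rule sum_mono, rule mult_right_mono)
    fix i assume "i \<in> {0..<n}"
    hence i: "i < n" by simp
    have "(1 + d i)^m + b i \<le> (1 + \<bar>d i\<bar>)^m + b i" using pow_abs_bound by simp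
    also have "\<dots> \<le> ?M" unfolding b_def by (rule trig_bound[OF dle[OF i]])
    finally show "(1 + d i)^m + b i \<le> ?M" .
  qed simp
  also have "\<dots> = ?M" using norm_phi by (simp add: sum_distrib_left[symmetric])
  finally show ?thesis using LHS by simp
qed

end
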